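(* Let $S$ be a finitely generated semigroup and let $S_+$ denote the set of non-invertible elements of $S$. Let $T=\bigcup_{i=1}^kS\bullet t_i$ be a finitely generated $S$-module such that $s\bullet t=t$ (with $s\in S$, $t\in T$) occurs only when $s$ is a unit of $S$. Then the set $T_{\mathrm{prim}}:=T\smallsetminus(S_+\bullet T)$ is finite and generates $T$ over $S$.
   Context: Semigroups are commutative monoids (written additively, with identity $0$) that are subsemigroups of finitely generated abelian groups such that their image in the torsion-free quotient of the ambient group is pointed (has no nonzero units). An $S$-module is a set $T$ with an action $\bullet\colon S\times T\to T$ satisfying $(s+s')\bullet t=s\bullet(s'\bullet t)$ and $0\bullet t=t$. $T$ is finitely generated over $S$ if $T=\bigcup_{i=1}^kS\bullet t_i$ for finitely many $t_i\in T$; a subset generates $T$ if $T$ is the union of the orbits $S\bullet t$ over its elements. $S_+\bullet T=\{s\bullet t\mid s\in S_+, t\in T\}$. *)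

theory Defs
  imports Main
begin

inductive_set monoid_span :: "'a::comm_monoid_add set \<Rightarrow> 'a set" for F where
  zero: "0 \<in> monoid_span F"
| gen: "x \<in> F \<Longrightarrow> x \<in> monoid_span F"
| add: "x \<in> monoid_span F \<Longrightarrow> y \<in> monoid_span F \<Longrightarrow> x + y \<in> monoid_span F"

inductive_set group_span :: "'a::ab_group_add set \<Rightarrow> 'a set" for F where
  zero: "0 \<in> group_span F"
| gen: "x \<in> F \<Longrightarrow> x \<in> group_span F"
| neg: "x \<in> group_span F \<Longrightarrow> - x \<in> group_span F"
| add: "x \<in> group_span F \<Longrightarrow> y \<in> group_span F \<Longrightarrow> x + y \<in> group_span F"

definition nsum :: "nat \<Rightarrow> 'a::comm_monoid_add \<Rightarrow> 'a" where
  "nsum n x = (\<Sum>i<n. x)"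

definition is_torsion :: "'a::ab_group_add \<Rightarrow> bool" where
  "is_torsion x \<longleftrightarrow> (\<exists>n>0. nsum n x = 0)"

text \<open>A semigroup in the sense of the paper: a submonoid S of a finitely generated
  abelian group G (here a finitely generated subgroup of an ambient abelian group type)
  whose image in the torsion-free quotient G / tors(G) is pointed.\<close>
definition paper_semigroup :: "'a::ab_group_add set \<Rightarrow> 'a set \<Rightarrow> bool" where
  "paper_semigroup G S \<longleftrightarrow>
     (\<exists>F. finite F \<and> G = group_span F) \<and>
     S \<subseteq> G \<and> 0 \<in> S \<and> (\<forall>x\<in>S. \<forall>y\<in>S. x + y \<in> S) \<and>
     (\<forall>x\<in>S. \<forall>y\<in>S. is_torsion (x + y) \<longrightarrow> is_torsion x)"

definition fg_monoid :: "'a::comm_monoid_add set \<Rightarrow> bool" where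
  "fg_monoid S \<longleftrightarrow> (\<exists>F. finite F \<and> F \<subseteq> S \<and> S = monoid_span F)"

definition units_of_monoid :: "'a::comm_monoid_add set \<Rightarrow> 'a set" where
  "units_of_monoid S = {s\<in>S. \<exists>s'\<in>S. s + s' = 0}"

definition nonunits :: "'a::comm_monoid_add set \<Rightarrow> 'a set" where
  "nonunits S = S - units_of_monoid S"

definition is_module :: "'a::comm_monoid_add set \<Rightarrow> 'b set \<Rightarrow> ('a \<Rightarrow> 'b \<Rightarrow> 'b) \<Rightarrow> bool" where
  "is_module S T act \<longleftrightarrow>
     (\<forall>s\<in>S. \<forall>t\<in>T. act s t \<in> T) \<and>
     (\<forall>s\<in>S. \<forall>s'\<in>S. \<forall>t\<in>T. act (s + s') t = act s (act s' t)) \<and>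
     (\<forall>t\<in>T. act 0 t = t)"

definition orbit_union :: "'a set \<Rightarrow> ('a \<Rightarrow> 'b \<Rightarrow> 'b) \<Rightarrow> 'b set \<Rightarrow> 'b set" where
  "orbit_union S act X = (\<Union>t\<in>X. (\<lambda>s. act s t) ` S)"

definition generates :: "'a set \<Rightarrow> 'b set \<Rightarrow> ('a \<Rightarrow> 'b \<Rightarrow> 'b) \<Rightarrow> 'b set \<Rightarrow> bool" where
  "generates S T act X \<longleftrightarrow> X \<subseteq> T \<and> T = orbit_union S act X"

definition fg_module :: "'a set \<Rightarrow> 'b set \<Rightarrow> ('a \<Rightarrow> 'b \<Rightarrow> 'b) \<Rightarrow> bool" where
  "fg_module S T act \<longleftrightarrow> (\<exists>X. finite X \<and> generates S T act X)"

definition set_act :: "('a \<Rightarrow> 'b \<Rightarrow> 'b) \<Rightarrow> 'a set \<Rightarrow> 'b set \<Rightarrow> 'b set" where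
  "set_act act A T = {act s t | s t. s \<in> A \<and> t \<in> T}"

end

theory Submission
  imports Defs
begin

lemma nsum_Suc: "nsum (Suc n) x = nsum n x + x"
  by (simp add: nsum_def)

lemma nsum_add: "nsum (m + k) x = nsum m x + nsum k x"
  by (induction k) (simp_all add: nsum_Suc nsum_def[of 0] add.assoc)

lemma nsum_mult0: "nsum n x = 0 \<Longrightarrow> nsum (q * n) x = 0"
  by (induction q) (simp_all add: nsum_add nsum_def[of 0])

lemma nsum_mod: "nsum n x = 0 \<Longrightarrow> nsum k x = nsum (k mod n) x"
proof -
  assume h: "nsum n x = 0"
  have "k = (k div n) * n + k mod n" by simp
  then have "nsum k x = nsum ((k div n) * n) x + nsum (k mod n) x"
    by (metis nsum_add)
  then show ?thesis using nsum_mult0[OF h] by simp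
qed

lemma span_insert_rep:
  "x \<in> monoid_span (insert e E) \<Longrightarrow> \<exists>k. \<exists>y\<in>monoid_span E. x = nsum k e + y"
proof (induction rule: monoid_span.induct)
  case zero
  then show ?case by (intro exI[of _ 0] bexI[of _ 0]) (auto simp: nsum_def intro: monoid_span.zero)
next
  case (gen x)
  then show ?case
  proof
    assume "x = e" then show ?thesis
      by (intro exI[of _ 1] bexI[of _ 0]) (auto simp: nsum_def intro: monoid_span.zero)
  next
    assume "x \<in> E" then show ?thesis
      by (intro exI[of _ 0] bexI[of _ x]) (auto simp: nsum_def intro: monoid_span.gen)
  qed
next
  case (add x y)
  then obtain k y1 k' y2 where "y1 \<in> monoid_span E" "x = nsum k e + y1"
    "y2 \<in> monoid_span E" "y = nsum k' e + y2" by blast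
  then show ?case
    by (intro exI[of _ "k + k'"] bexI[of _ "y1 + y2"])
       (auto simp: nsum_add algebra_simps intro: monoid_span.add)
qed

lemma finite_span_torsion:
  fixes E :: "'a::ab_group_add set"
  shows "finite E \<Longrightarrow> (\<forall>e\<in>E. is_torsion e) \<Longrightarrow> finite (monoid_span E)"
proof (induction E rule: finite_induct)
  case empty
  have "monoid_span ({}::'a set) \<subseteq> {0}"
  proof
    fix x :: 'a assume "x \<in> monoid_span {}"
    then show "x \<in> {0}" by (induction rule: monoid_span.induct) auto
  qed
  then show ?case using finite_subset by blast
next
  case (insert e E)
  then obtain n where n: "n > 0" "nsum n e = 0" by (auto simp: is_torsion_def)
  have "monoid_span (insert e E) \<subseteq> (\<lambda>(k,y). nsum k e + y) ` ({..<n} \<times> monoid_span E)"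
  proof
    fix x assume "x \<in> monoid_span (insert e E)"
    then obtain k y where "y \<in> monoid_span E" "x = nsum k e + y"
      using span_insert_rep by blast
    then have "x = nsum (k mod n) e + y" using nsum_mod[OF n(2)] by simp
    moreover have "k mod n < n" using n by simp
    ultimately show "x \<in> (\<lambda>(k,y). nsum k e + y) ` ({..<n} \<times> monoid_span E)"
      using \<open>y \<in> monoid_span E\<close> by force
  qed
  moreover have "finite (monoid_span E)" using insert by auto
  ultimately show ?case using finite_subset by blast
qed

lemma units_in_span:
  assumes clos: "\<forall>x\<in>S. \<forall>y\<in>S. x + y \<in> S" and SF: "S = monoid_span F"
  shows "x \<in> monoid_span F \<Longrightarrow> x \<in> units_of_monoid S \<Longrightarrow>
     x \<in> monoid_span (F \<inter> units_of_monoid S)"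
proof (induction rule: monoid_span.induct)
  case zero then show ?case by (simp add: monoid_span.zero)
next
  case (gen x) then show ?case by (auto intro: monoid_span.gen)
next
  case (add x y)
  have xS: "x \<in> S" "y \<in> S" using add SF by auto
  obtain w where w: "w \<in> S" "x + y + w = 0" using add(5) by (auto simp: units_of_monoid_def)
  have "x \<in> units_of_monoid S" unfolding units_of_monoid_def
    using xS w clos by (intro CollectI conjI bexI[of _ "y + w"]) (auto simp: add.assoc)
  moreover have "y \<in> units_of_monoid S" unfolding units_of_monoid_def
    using xS w clos by (intro CollectI conjI bexI[of _ "x + w"]) (auto simp: algebra_simps)
  ultimately show ?case using add by (auto intro: monoid_span.add)
qed

theorem lemma4p2:
  fixes G S :: "'a::ab_group_add set" and T :: "'b set" and act :: "'a \<Rightarrow> 'b \<Rightarrow> 'b"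
  assumes "paper_semigroup G S"
    and "fg_monoid S"
    and "is_module S T act"
    and "fg_module S T act"
    and "\<forall>s\<in>S. \<forall>t\<in>T. act s t = t \<longrightarrow> s \<in> units_of_monoid S"
  shows "finite (T - set_act act (nonunits S) T) \<and>
         generates S T act (T - set_act act (nonunits S) T)"
proof -
  define U where "U = units_of_monoid S"
  define N where "N = nonunits S"
  define P where "P = T - set_act act N T"
  have clos: "\<forall>x\<in>S. \<forall>y\<in>S. x + y \<in> S" and zS: "0 \<in> S"
    and pt: "\<forall>x\<in>S. \<forall>y\<in>S. is_torsion (x + y) \<longrightarrow> is_torsion x"
    using assms(1) by (auto simp: paper_semigroup_def)
  have actT: "\<And>s t. s \<in> S \<Longrightarrow> t \<in> T \<Longrightarrow> act s t \<in> T"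
    and actadd: "\<And>s s' t. s \<in> S \<Longrightarrow> s' \<in> S \<Longrightarrow> t \<in> T \<Longrightarrow> act (s + s') t = act s (act s' t)"
    and act0: "\<And>t. t \<in> T \<Longrightarrow> act 0 t = t"
    using assms(3) by (auto simp: is_module_def)
  obtain X where X: "finite X" "X \<subseteq> T" "T = orbit_union S act X"
    using assms(4) by (auto simp: fg_module_def generates_def)
  have US: "U \<subseteq> S" by (auto simp: U_def units_of_monoid_def)
  have NS: "N \<subseteq> S" by (auto simp: N_def nonunits_def)
  have unit_left: "\<And>a b. a \<in> S \<Longrightarrow> b \<in> S \<Longrightarrow> a + b \<in> U \<Longrightarrow> a \<in> U"
  proof -
    fix a b assume ab: "a \<in> S" "b \<in> S" "a + b \<in> U"
    then obtain w where w: "w \<in> S" "a + b + w = 0" by (auto simp: U_def units_of_monoid_def)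
    show "a \<in> U" unfolding U_def units_of_monoid_def
      using ab w clos by (intro CollectI conjI bexI[of _ "b + w"]) (auto simp: add.assoc)
  qed
  have nonunit_add: "\<And>a b. a \<in> N \<Longrightarrow> b \<in> S \<Longrightarrow> a + b \<in> N"
  proof -
    fix a b assume ab: "a \<in> N" "b \<in> S"
    then have "a + b \<in> S" "a \<notin> U" using NS clos by (auto simp: N_def nonunits_def U_def)
    then show "a + b \<in> N" using unit_left[of a b] ab NS
      by (auto simp: N_def nonunits_def U_def)
  qed
  have finU: "finite U"
  proof -
    obtain F where F: "finite F" "F \<subseteq> S" "S = monoid_span F"
      using assms(2) by (auto simp: fg_monoid_def)
    have tors: "\<forall>e\<in>F \<inter> U. is_torsion e"
    proof
      fix e assume "e \<in> F \<inter> U"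
      then obtain w where w: "e \<in> S" "w \<in> S" "e + w = 0" by (auto simp: U_def units_of_monoid_def)
      have "is_torsion (e + w)" using w(3) by (auto simp: is_torsion_def nsum_def intro: exI[of _ 1])
      then show "is_torsion e" using pt w by blast
    qed
    have "U \<subseteq> monoid_span (F \<inter> U)"
      using units_in_span[OF clos F(3)] F(3) US unfolding U_def by blast
    moreover have "finite (monoid_span (F \<inter> U))"
      using finite_span_torsion[of "F \<inter> U"] F(1) tors by blast
    ultimately show ?thesis using finite_subset by blast
  qed
  have PT: "P \<subseteq> T" by (auto simp: P_def)
  have finP: "finite P"
  proof -
    have "P \<subseteq> (\<lambda>(u,x). act u x) ` (U \<times> X)"
    proof
      fix p assume p: "p \<in> P"
      then have "p \<in> T" using PT by blast
      then obtain s x where sx: "s \<in> S" "x \<in> X" "p = act s x"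
        using X(3) by (auto simp: orbit_union_def)
      have "s \<in> U"
      proof (rule ccontr)
        assume "s \<notin> U"
        then have "s \<in> N" using sx by (auto simp: N_def nonunits_def U_def)
        then have "p \<in> set_act act N T" using sx X(2) by (auto simp: set_act_def)
        then show False using p by (auto simp: P_def)
      qed
      then show "p \<in> (\<lambda>(u,x). act u x) ` (U \<times> X)" using sx by force
    qed
    then show ?thesis using finU X(1) finite_subset by blast
  qed
  define R where "R = {(y,x). y \<in> X \<and> x \<in> X \<and> (\<exists>\<sigma>\<in>N. x = act \<sigma> y)}"
  have "trans R"
  proof (rule transI)
    fix x y z assume "(x,y) \<in> R" "(y,z) \<in> R"
    then obtain a b where "a \<in> N" "y = act a x" "b \<in> N" "z = act b y" "x \<in> X" "y \<in> X" "z \<in> X"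
      by (auto simp: R_def)
    then have "z = act (b + a) x" "b + a \<in> N" using actadd[of b a x] NS X(2) nonunit_add by (auto, metis subsetD)
    then show "(x,z) \<in> R" using \<open>x \<in> X\<close> \<open>z \<in> X\<close> by (auto simp: R_def)
  qed
  moreover have "\<forall>x. (x,x) \<notin> R"
  proof (intro allI notI)
    fix x assume "(x,x) \<in> R"
    then obtain a where "a \<in> N" "x = act a x" "x \<in> X" by (auto simp: R_def)
    then have "a \<in> U" using assms(5) NS X(2) unfolding U_def by (metis subsetD)
    then show False using \<open>a \<in> N\<close> by (auto simp: N_def nonunits_def U_def)
  qed
  ultimately have "acyclic R" by (simp add: acyclic_def)
  moreover have "finite R"
  proof -
    have "R \<subseteq> X \<times> X" by (auto simp: R_def)
    then show ?thesis using X(1) finite_subset by blast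
  qed
  ultimately have wfR: "wf R" by (simp add: finite_acyclic_wf)
  have gen: "\<And>x. x \<in> X \<longrightarrow> (\<exists>p\<in>P. \<exists>b\<in>S. x = act b p)"
  proof -
    fix x show "x \<in> X \<longrightarrow> (\<exists>p\<in>P. \<exists>b\<in>S. x = act b p)"
    proof (induction x rule: wf_induct[OF wfR])
      case (1 x)
      show ?case
      proof
        assume xX: "x \<in> X"
        show "\<exists>p\<in>P. \<exists>b\<in>S. x = act b p"
        proof (cases "x \<in> set_act act N T")
          case False
          then have "x \<in> P" using xX X(2) by (auto simp: P_def)
          then show ?thesis using act0 xX X(2) zS by (intro bexI[of _ x] bexI[of _ 0]) auto
        next
          case True
          then obtain \<sigma> t' where st: "\<sigma> \<in> N" "t' \<in> T" "x = act \<sigma> t'" by (auto simp: set_act_def)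
          then obtain b y where bby: "b \<in> S" "y \<in> X" "t' = act b y"
            using X(3) by (auto simp: orbit_union_def)
          have yT: "y \<in> T" using bby X(2) by auto
          have x2: "x = act (\<sigma> + b) y" using st bby actadd NS yT by auto
          have "\<sigma> + b \<in> N" using nonunit_add st bby by auto
          then have "(y,x) \<in> R" using x2 xX bby by (auto simp: R_def)
          then obtain p c where pc: "p \<in> P" "c \<in> S" "y = act c p" using 1 bby by blast
          have "x = act (\<sigma> + b + c) p" using x2 pc actadd[of "\<sigma> + b" c p] PT \<open>\<sigma> + b \<in> N\<close> NS by (metis subsetD)
          moreover have "\<sigma> + b + c \<in> S" using \<open>\<sigma> + b \<in> N\<close> NS clos pc by auto
          ultimately show ?thesis using pc by blast
        qed
      qed
    qed
  qed
  have "T = orbit_union S act P"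
  proof
    show "T \<subseteq> orbit_union S act P"
    proof
      fix t assume "t \<in> T"
      then obtain a x where ax: "a \<in> S" "x \<in> X" "t = act a x" using X(3) by (auto simp: orbit_union_def)
      then obtain p b where pb: "p \<in> P" "b \<in> S" "x = act b p" using gen by blast
      then have "t = act (a + b) p" using ax actadd PT by auto
      moreover have "a + b \<in> S" using ax pb clos by auto
      ultimately show "t \<in> orbit_union S act P" using pb by (auto simp: orbit_union_def)
    qed
  next
    show "orbit_union S act P \<subseteq> T" using actT PT by (auto simp: orbit_union_def)
  qed
  then show ?thesis using finP PT unfolding P_def N_def generates_def by blast
qed

end
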